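(* Let $n\geq 3$ and let $G\in\mathcal{G}_{2n}$ with $F(G)=n-1$ be minimal. Then $G$ is not $2$-extendable if and only if $G$ has a perfect matching $M=\{u_kv_k : k=1,\dots,n\}$ with $f(G,M)=n-1$ such that: $\{v_1,\dots,v_{n-1}\}$ and $\{u_1,\dots,u_{n-1}\}$ are independent sets of $G$; $G[\{u_1,\dots,u_n,v_n\}]$ contains at least two independent edges; $\{v_iv_n,\ v_ju_n\}\subseteq E(G)$ for some $i\neq j$ with $1\leq i,j\leq n-1$; and for every $1\leq k\leq n-1$ the induced subgraph $G[\{u_n,v_n,u_k,v_k\}]$ is exactly a $4$-cycle.
   Context: All graphs are finite and simple. $\mathcal{G}_{2n}$ denotes the set of all graphs with $2n$ vertices that have a perfect matching. For a perfect matching $M$ of $G$, a forcing set of $M$ is a subset $S\subseteq M$ contained in no other perfect matching of $G$; $f(G,M)$ is the minimum size of a forcing set of $M$, and $F(G)$ is the maximum of $f(G,M)$ over all perfect matchings $M$. A graph $G\in\mathcal{G}_{2n}$ with $F(G)=n-1$ is minimal if $F(G-e)\leq n-2$ for each edge $e$ of $G$. A connected graph with at least $2l+2$ vertices is $l$-extendable if it has a perfect matching and every matching of size $l$ is contained in a perfect matching. *)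

theory Defs
  imports Main
begin

type_synonym 'a graph = "'a set \<times> 'a set set"

definition verts :: "'a graph \<Rightarrow> 'a set" where "verts G = fst G"
definition edges :: "'a graph \<Rightarrow> 'a set set" where "edges G = snd G"

definition simple_graph :: "'a graph \<Rightarrow> bool" where
  "simple_graph G \<longleftrightarrow> finite (verts G) \<and> (\<forall>e\<in>edges G. e \<subseteq> verts G \<and> card e = 2)"

definition matching :: "'a graph \<Rightarrow> 'a set set \<Rightarrow> bool" where
  "matching G M \<longleftrightarrow> M \<subseteq> edges G \<and> (\<forall>e1\<in>M. \<forall>e2\<in>M. e1 \<noteq> e2 \<longrightarrow> e1 \<inter> e2 = {})"

definition perfect_matching :: "'a graph \<Rightarrow> 'a set set \<Rightarrow> bool" where
  "perfect_matching G M \<longleftrightarrow> matching G M \<and> \<Union>M = verts G"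

definition has_perfect_matching :: "'a graph \<Rightarrow> bool" where
  "has_perfect_matching G \<longleftrightarrow> (\<exists>M. perfect_matching G M)"

definition graphs_pm :: "nat \<Rightarrow> 'a graph set" where
  "graphs_pm n = {G. simple_graph G \<and> card (verts G) = 2 * n \<and> has_perfect_matching G}"

definition forcing_set :: "'a graph \<Rightarrow> 'a set set \<Rightarrow> 'a set set \<Rightarrow> bool" where
  "forcing_set G M S \<longleftrightarrow> S \<subseteq> M \<and> (\<forall>M'. perfect_matching G M' \<and> S \<subseteq> M' \<longrightarrow> M' = M)"

definition forcing_number :: "'a graph \<Rightarrow> 'a set set \<Rightarrow> nat" where
  "forcing_number G M = Inf {card S | S. forcing_set G M S}"

text \<open>F(G): maximum forcing number over all perfect matchings
  (the nat supremum; it is 0 if G has no perfect matching).\<close>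
definition max_forcing_number :: "'a graph \<Rightarrow> nat" where
  "max_forcing_number G = Sup {forcing_number G M | M. perfect_matching G M}"

definition delete_edge :: "'a graph \<Rightarrow> 'a set \<Rightarrow> 'a graph" where
  "delete_edge G e = (verts G, edges G - {e})"

definition minimal_Fn1 :: "nat \<Rightarrow> 'a graph \<Rightarrow> bool" where
  "minimal_Fn1 n G \<longleftrightarrow> max_forcing_number G = n - 1 \<and>
     (\<forall>e\<in>edges G. max_forcing_number (delete_edge G e) \<le> n - 2)"

definition adj :: "'a graph \<Rightarrow> 'a \<Rightarrow> 'a \<Rightarrow> bool" where
  "adj G x y \<longleftrightarrow> {x, y} \<in> edges G"

definition connected_graph :: "'a graph \<Rightarrow> bool" where
  "connected_graph G \<longleftrightarrow> (\<forall>x\<in>verts G. \<forall>y\<in>verts G. (adj G)\<^sup>*\<^sup>* x y)"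

definition extendable :: "nat \<Rightarrow> 'a graph \<Rightarrow> bool" where
  "extendable l G \<longleftrightarrow> connected_graph G \<and> card (verts G) \<ge> 2 * l + 2 \<and> has_perfect_matching G \<and>
     (\<forall>N. matching G N \<and> card N = l \<longrightarrow> (\<exists>M. perfect_matching G M \<and> N \<subseteq> M))"

definition independent_set :: "'a graph \<Rightarrow> 'a set \<Rightarrow> bool" where
  "independent_set G S \<longleftrightarrow> S \<subseteq> verts G \<and> (\<forall>x\<in>S. \<forall>y\<in>S. {x, y} \<notin> edges G)"

definition induced_edges :: "'a graph \<Rightarrow> 'a set \<Rightarrow> 'a set set" where
  "induced_edges G S = {e \<in> edges G. e \<subseteq> S}"

definition has_two_indep_edges :: "'a graph \<Rightarrow> 'a set \<Rightarrow> bool" where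
  "has_two_indep_edges G S \<longleftrightarrow> (\<exists>e1\<in>induced_edges G S. \<exists>e2\<in>induced_edges G S. e1 \<inter> e2 = {})"

definition induced_C4 :: "'a graph \<Rightarrow> 'a set \<Rightarrow> bool" where
  "induced_C4 G S \<longleftrightarrow> (\<exists>a b c d. distinct [a, b, c, d] \<and> S = {a, b, c, d} \<and>
      induced_edges G S = {{a, b}, {b, c}, {c, d}, {d, a}})"

end

theory Submission
  imports Defs
begin

lemma pm_uniq:
  assumes "perfect_matching H N" "{a, b} \<in> N" "{a, c} \<in> N" "card {a, b} = 2" "card {a, c} = 2"
  shows "b = c"
proof (rule ccontr)
  assume "b \<noteq> c"
  then have "{a, b} \<noteq> {a, c}" using assms(4) by (auto simp: doubleton_eq_iff)
  then have "{a, b} \<inter> {a, c} = {}" using assms(1-3) unfolding perfect_matching_def matching_def by metis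
  then show False by simp
qed

lemma mfn_ge:
  assumes "simple_graph H" "perfect_matching H N"
  shows "forcing_number H N \<le> max_forcing_number H"
proof -
  have fe: "finite (edges H)"
  proof -
    have "edges H \<subseteq> Pow (verts H)" using assms(1) by (auto simp: simple_graph_def)
    moreover have "finite (verts H)" using assms(1) by (simp add: simple_graph_def)
    ultimately show ?thesis using finite_subset by blast
  qed
  have "{N. perfect_matching H N} \<subseteq> Pow (edges H)" by (auto simp: perfect_matching_def matching_def)
  then have "finite {N. perfect_matching H N}" using fe finite_subset by blast
  then have "finite {forcing_number H N | N. perfect_matching H N}"
    using finite_image_set by blast
  then show ?thesis unfolding max_forcing_number_def
    by (intro cSup_upper bdd_above_finite) (use assms(2) in auto)
qed


locale pmg =
  fixes G :: "'a graph" and M :: "'a set set"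
  assumes sg: "simple_graph G" and pm: "perfect_matching G M"
begin

lemma finV: "finite (verts G)" using sg by (simp add: simple_graph_def)
lemma edge_card: "e \<in> edges G \<Longrightarrow> card e = 2" using sg by (simp add: simple_graph_def)
lemma edge_sub: "e \<in> edges G \<Longrightarrow> e \<subseteq> verts G" using sg by (simp add: simple_graph_def)
lemma finE: "finite (edges G)"
proof -
  have "edges G \<subseteq> Pow (verts G)" using edge_sub by auto
  then show ?thesis using finV finite_subset by blast
qed
lemma M_E: "M \<subseteq> edges G" using pm by (simp add: perfect_matching_def matching_def)
lemma M_disj: "m1 \<in> M \<Longrightarrow> m2 \<in> M \<Longrightarrow> m1 \<noteq> m2 \<Longrightarrow> m1 \<inter> m2 = {}"
  using pm by (simp add: perfect_matching_def matching_def)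
lemma M_Un: "\<Union>M = verts G" using pm by (simp add: perfect_matching_def)
lemma finM: "finite M" using M_E finE finite_subset by blast

lemma edge_not_loop: "{x, y} \<in> edges G \<Longrightarrow> x \<noteq> y"
  using edge_card by fastforce

lemma edge_V: "{x, y} \<in> edges G \<Longrightarrow> x \<in> verts G \<and> y \<in> verts G"
  using edge_sub by auto

lemma M_uniq: "{x, y} \<in> M \<Longrightarrow> {x, z} \<in> M \<Longrightarrow> y = z"
proof -
  assume a: "{x, y} \<in> M" "{x, z} \<in> M"
  have "{x,y} = {x,z}" using M_disj[OF a] by blast
  moreover have "x \<noteq> y" "x \<noteq> z" using a M_E edge_not_loop by auto
  ultimately show ?thesis by (metis doubleton_eq_iff)
qed

definition mate :: "'a \<Rightarrow> 'a" where "mate x = (THE y. {x, y} \<in> M)"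

lemma mate_M: assumes "x \<in> verts G" shows "{x, mate x} \<in> M"
proof -
  obtain m where m: "m \<in> M" "x \<in> m" using M_Un assms by auto
  then have "card m = 2" using M_E edge_card by auto
  then obtain a b where ab: "m = {a,b}" "a \<noteq> b" by (auto simp: card_2_iff)
  obtain y where y: "{x, y} \<in> M"
  proof (cases "x = a")
    case True then show ?thesis using that[of b] m ab by simp
  next
    case False then have "x = b" using m ab by simp
    then show ?thesis using that[of a] m ab by (simp add: insert_commute)
  qed
  have "mate x = y" unfolding mate_def by (rule the_equality) (use y M_uniq in auto)
  then show ?thesis using y by simp
qed

lemma mate_eq: assumes "{x, y} \<in> M" shows "mate x = y"
proof -
  have "x \<in> verts G" using assms M_E edge_V by blast
  then have "{x, mate x} \<in> M" by (rule mate_M)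
  then show ?thesis using M_uniq assms by blast
qed

lemma mate_V: assumes "x \<in> verts G" shows "mate x \<in> verts G"
proof -
  have "{x, mate x} \<in> edges G" using mate_M[OF assms] M_E by blast
  then show ?thesis using edge_V by blast
qed
lemma mate_neq: assumes "x \<in> verts G" shows "mate x \<noteq> x"
proof -
  have "{x, mate x} \<in> edges G" using mate_M[OF assms] M_E by blast
  then show ?thesis using edge_not_loop by metis
qed
lemma mate_mate: assumes "x \<in> verts G" shows "mate (mate x) = x"
proof -
  have "{mate x, x} \<in> M" using mate_M[OF assms] by (simp add: insert_commute)
  then show ?thesis by (rule mate_eq)
qed
lemma mate_inj: "x \<in> verts G \<Longrightarrow> y \<in> verts G \<Longrightarrow> mate x = mate y \<Longrightarrow> x = y"
  using mate_mate by metis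
lemma M_form: "m \<in> M \<Longrightarrow> x \<in> m \<Longrightarrow> m = {x, mate x}"
proof -
  assume a: "m \<in> M" "x \<in> m"
  then have xv: "x \<in> verts G" using M_Un by auto
  show ?thesis using M_disj[OF a(1) mate_M[OF xv]] a by blast
qed

lemma card_V: "card (verts G) = 2 * card M"
proof -
  have "card (\<Union>M) = sum card M"
    by (rule card_Union_disjoint) (use M_disj finV M_Un in \<open>auto simp: pairwise_def disjnt_def intro: finite_subset\<close>)
  also have "\<dots> = sum (\<lambda>_. 2) M" using M_E edge_card by (intro sum.cong) auto
  finally show ?thesis using M_Un by simp
qed


lemma vE: "x \<in> verts G \<Longrightarrow> {x, mate x} \<in> edges G" using mate_M M_E by blast

lemma swap_pm:
  assumes T: "T \<subseteq> M" and A: "A \<subseteq> edges G"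
    and Ad: "\<And>a b. a \<in> A \<Longrightarrow> b \<in> A \<Longrightarrow> a \<noteq> b \<Longrightarrow> a \<inter> b = {}"
    and AU: "\<Union>A = \<Union>T"
  shows "perfect_matching G ((M - T) \<union> A)"
  unfolding perfect_matching_def matching_def
proof (intro conjI)
  show "M - T \<union> A \<subseteq> edges G" using M_E A by blast
  show "\<forall>e1\<in>M - T \<union> A. \<forall>e2\<in>M - T \<union> A. e1 \<noteq> e2 \<longrightarrow> e1 \<inter> e2 = {}"
  proof (intro ballI impI)
    fix e1 e2 assume e1: "e1 \<in> M - T \<union> A" and e2: "e2 \<in> M - T \<union> A" and ne: "e1 \<noteq> e2"
    have key: "m \<in> M - T \<Longrightarrow> a \<in> A \<Longrightarrow> m \<inter> a = {}" for m a
    proof -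
      assume m: "m \<in> M - T" and a: "a \<in> A"
      have "a \<subseteq> \<Union>T" using a AU by blast
      moreover have "m \<inter> \<Union>T = {}" using m T M_disj by blast
      ultimately show ?thesis by blast
    qed
    show "e1 \<inter> e2 = {}" using e1 e2 ne key Ad M_disj by blast
  qed
  show "\<Union>(M - T \<union> A) = verts G" using AU T M_Un by blast
qed

lemma sub_pm_eq: assumes pm': "perfect_matching G M'" and sub: "M \<subseteq> M'" shows "M' = M"
proof
  have dis: "\<forall>e1\<in>M'. \<forall>e2\<in>M'. e1 \<noteq> e2 \<longrightarrow> e1 \<inter> e2 = {}" and E': "M' \<subseteq> edges G"
    and U': "\<Union>M' = verts G"
    using pm' by (auto simp: perfect_matching_def matching_def)
  show "M' \<subseteq> M"
  proof
    fix e assume e: "e \<in> M'"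
    have "e \<in> edges G" using e E' by blast
    then have "card e = 2" by (rule edge_card)
    then have "e \<noteq> {}" by auto
    then obtain v where v: "v \<in> e" by blast
    have vV: "v \<in> verts G" using v e U' by blast
    have vm: "{v, mate v} \<in> M'" using mate_M[OF vV] sub by blast
    have "e = {v, mate v}"
    proof (rule ccontr)
      assume "e \<noteq> {v, mate v}"
      then have "e \<inter> {v, mate v} = {}" using dis[rule_format, OF e vm] by simp
      then show False using v by blast
    qed
    then show "e \<in> M" using mate_M[OF vV] by simp
  qed
qed (rule sub)

lemma M_forcing: "forcing_set G M M"
  unfolding forcing_set_def using sub_pm_eq by simp

lemma fn_le: "forcing_set G M S \<Longrightarrow> forcing_number G M \<le> card S"
  unfolding forcing_number_def by (rule cInf_lower) (blast, simp)

definition has_alt :: bool where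
  "has_alt \<longleftrightarrow> (\<forall>x\<in>verts G. \<forall>y\<in>verts G. y \<noteq> x \<and> y \<noteq> mate x \<longrightarrow>
     ({x, y} \<in> edges G \<and> {mate x, mate y} \<in> edges G) \<or> ({x, mate y} \<in> edges G \<and> {mate x, y} \<in> edges G))"

lemma fiber_other: "m \<in> M \<Longrightarrow> x \<in> verts G \<Longrightarrow> x \<notin> m \<Longrightarrow> m \<inter> {x, mate x} = {}"
  using M_disj mate_M M_form by (metis insert_disjoint(1) insert_iff)

lemma fn_ge:
  assumes alt: has_alt
  shows "forcing_number G M \<ge> card M - 1"
  unfolding forcing_number_def
proof (rule cInf_greatest)
  show "{card S |S. forcing_set G M S} \<noteq> {}" using M_forcing by blast
  fix k assume "k \<in> {card S |S. forcing_set G M S}"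
  then obtain S where S: "forcing_set G M S" "k = card S" by blast
  show "card M - 1 \<le> k"
  proof (rule ccontr)
    assume "\<not> card M - 1 \<le> k"
    then have lt: "card S + 2 \<le> card M" using S by linarith
    have SM: "S \<subseteq> M" using S by (simp add: forcing_set_def)
    have "card (M - S) \<ge> 2" using lt card_Diff_subset[OF finite_subset[OF SM finM] SM] by linarith
    then obtain m1 m2 where m: "m1 \<in> M - S" "m2 \<in> M - S" "m1 \<noteq> m2"
      by (metis One_nat_def Suc_1 card_le_Suc_iff insert_iff numeral_le_one_iff semiring_norm(69) Suc_le_D)
    obtain x where x: "x \<in> m1" using m M_E edge_card by (metis card_2_iff insertI1 Diff_iff subsetD)
    obtain y where y: "y \<in> m2" using m M_E edge_card by (metis card_2_iff insertI1 Diff_iff subsetD)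
    have xV: "x \<in> verts G" and yV: "y \<in> verts G" using x y m M_Un by auto
    have m1e: "m1 = {x, mate x}" and m2e: "m2 = {y, mate y}" using M_form m x y by auto
    have dis: "m1 \<inter> m2 = {}" using M_disj m by auto
    have ny: "y \<noteq> x" "y \<noteq> mate x" using dis m1e m2e by auto
    have myV: "mate y \<in> verts G" using mate_V yV by blast
    have nmy: "mate y \<noteq> x" "mate y \<noteq> mate x" using dis m1e m2e by auto
    have xm: "mate x \<noteq> x" "mate y \<noteq> y" using mate_neq xV yV by auto
    obtain c1 c2 where c: "c1 \<in> edges G" "c2 \<in> edges G" "c1 \<inter> c2 = {}" "c1 \<union> c2 = m1 \<union> m2" "c1 \<notin> M"
    proof (cases "{x, y} \<in> edges G \<and> {mate x, mate y} \<in> edges G")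
      case True
      have "{x,y} \<notin> M" using mate_eq ny by metis
      then show ?thesis using that[of "{x,y}" "{mate x, mate y}"] True m1e m2e ny nmy xm by auto
    next
      case False
      then have c: "{x, mate y} \<in> edges G \<and> {mate x, y} \<in> edges G" using alt xV yV ny unfolding has_alt_def by blast
      have "{x, mate y} \<notin> M" using mate_eq nmy by metis
      then show ?thesis using that[of "{x, mate y}" "{mate x, y}"] c m1e m2e ny nmy xm by auto
    qed
    define M' where "M' = (M - {m1, m2}) \<union> {c1, c2}"
    have pm': "perfect_matching G M'" unfolding M'_def
      by (rule swap_pm) (use m c in auto)
    have "S \<subseteq> M'" using SM m unfolding M'_def by blast
    then have "M' = M" using S pm' by (auto simp: forcing_set_def)
    moreover have "c1 \<in> M'" unfolding M'_def by blast
    ultimately show False using c by blast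
  qed
qed

lemma pm'_edge: "perfect_matching G M' \<Longrightarrow> e \<in> M' \<Longrightarrow> e \<in> edges G"
  by (auto simp: perfect_matching_def matching_def)

lemma pm'_partner: assumes "perfect_matching G M'" "x \<in> verts G" shows "\<exists>w. {x, w} \<in> M'"
proof -
  obtain e where e: "e \<in> M'" "x \<in> e" using assms by (auto simp: perfect_matching_def)
  have "card e = 2" using pm'_edge[OF assms(1) e(1)] edge_card by blast
  then obtain a b where ab: "e = {a, b}" "a \<noteq> b" by (auto simp: card_2_iff)
  show ?thesis
  proof (cases "x = a")
    case True then show ?thesis using e ab by blast
  next
    case False then have "x = b" using e ab by simp
    then show ?thesis using e ab by (metis insert_commute)
  qed
qed

lemma pm'_uniq: "perfect_matching G M' \<Longrightarrow> {a, b} \<in> M' \<Longrightarrow> {a, c} \<in> M' \<Longrightarrow> b = c"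
  by (rule pm_uniq) (auto dest: pm'_edge edge_card)

lemma alt_of_fn:
  assumes fn: "forcing_number G M = card M - 1" and n3: "card M \<ge> 3"
  shows has_alt
  unfolding has_alt_def
proof (intro ballI impI)
  fix x y assume xV: "x \<in> verts G" and yV: "y \<in> verts G" and ny: "y \<noteq> x \<and> y \<noteq> mate x"
  show "({x, y} \<in> edges G \<and> {mate x, mate y} \<in> edges G) \<or> ({x, mate y} \<in> edges G \<and> {mate x, y} \<in> edges G)"
  proof (rule ccontr)
    assume nalt: "\<not> ?thesis"
    have mxV: "mate x \<in> verts G" and myV: "mate y \<in> verts G" using mate_V xV yV by auto
    have mm: "mate (mate x) = x" "mate (mate y) = y" using mate_mate xV yV by auto
    have neq: "mate x \<noteq> x" "mate y \<noteq> y" using mate_neq xV yV by auto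
    have ny2: "mate y \<noteq> x" "mate y \<noteq> mate x" using ny mm by metis+
    have fx: "{x, mate x} \<in> M" and fy: "{y, mate y} \<in> M" using mate_M xV yV by auto
    have fne: "{x, mate x} \<noteq> {y, mate y}" using ny ny2 by (auto simp: doubleton_eq_iff)
    define S where "S = M - {{x, mate x}, {y, mate y}}"
    have fs: "forcing_set G M S" unfolding forcing_set_def
    proof (intro conjI allI impI)
      show "S \<subseteq> M" unfolding S_def by blast
      fix M' assume a: "perfect_matching G M' \<and> S \<subseteq> M'"
      then have pm': "perfect_matching G M'" and SM': "S \<subseteq> M'" by auto
      have inW: "w \<in> {x, mate x, y, mate y}" if pw: "{p, w} \<in> M'" and p: "p \<in> {x, mate x, y, mate y}" for p w
      proof (rule ccontr)
        assume wn: "w \<notin> {x, mate x, y, mate y}"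
        have wV: "w \<in> verts G" using pw pm'_edge[OF pm'] edge_V by blast
        have fw: "{w, mate w} \<in> M" using mate_M wV by blast
        have mwn: "mate w \<notin> {x, mate x, y, mate y}" using wn mm mate_mate[OF wV] by auto
        have "{w, mate w} \<noteq> {x, mate x}" "{w, mate w} \<noteq> {y, mate y}" using wn by (auto simp: doubleton_eq_iff)
        then have "{w, mate w} \<in> S" using fw unfolding S_def by simp
        then have "{w, mate w} \<in> M'" using SM' by blast
        then have "p = mate w" using pm'_uniq[OF pm'] pw by (metis insert_commute)
        then show False using mwn p by simp
      qed
      have loop: "{p, p} \<notin> M'" for p using pm'_edge[OF pm'] edge_not_loop by blast
      obtain w1 where w1: "{x, w1} \<in> M'" using pm'_partner[OF pm' xV] by blast
      have w1W: "w1 \<in> {x, mate x, y, mate y}" using inW[OF w1] by simp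
      have w1x: "w1 \<noteq> x" using w1 loop by blast
      have xmx: "{x, mate x} \<in> M'"
      proof (rule ccontr)
        assume nx: "{x, mate x} \<notin> M'"
        obtain w2 where w2: "{mate x, w2} \<in> M'" using pm'_partner[OF pm' mxV] by blast
        have w2W: "w2 \<in> {x, mate x, y, mate y}" using inW[OF w2] by simp
        have w2m: "w2 \<noteq> mate x" using w2 loop by blast
        have w2x: "w2 \<noteq> x" using w2 nx by (metis insert_commute)
        have w1m: "w1 \<noteq> mate x" using w1 nx by blast
        have "w1 \<noteq> w2" using pm'_uniq[OF pm'] w1 w2 neq by (metis insert_commute)
        then have "(w1 = y \<and> w2 = mate y) \<or> (w1 = mate y \<and> w2 = y)" using w1W w2W w1x w1m w2x w2m by auto
        then show False using nalt w1 w2 pm'_edge[OF pm'] by (auto simp: insert_commute)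
      qed
      have ymy: "{y, mate y} \<in> M'"
      proof -
        obtain w3 where w3: "{y, w3} \<in> M'" using pm'_partner[OF pm' yV] by blast
        have w3W: "w3 \<in> {x, mate x, y, mate y}" using inW[OF w3] by simp
        have "w3 \<noteq> y" using w3 loop by blast
        moreover have "w3 \<noteq> x" using pm'_uniq[OF pm', of x y "mate x"] xmx w3 ny by (metis insert_commute)
        moreover have "w3 \<noteq> mate x" using pm'_uniq[OF pm', of "mate x" x y] xmx w3 ny by (metis insert_commute)
        ultimately have "w3 = mate y" using w3W by auto
        then show ?thesis using w3 by simp
      qed
      have "M \<subseteq> M'" using SM' xmx ymy unfolding S_def by blast
      then show "M' = M" using sub_pm_eq pm' by blast
    qed
    have "card S = card M - 2" unfolding S_def using fx fy fne finM
      by (subst card_Diff_subset) auto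
    then have "forcing_number G M \<le> card M - 2" using fn_le[OF fs] by simp
    then show False using fn n3 by linarith
  qed
qed


lemma del_pmg: assumes "e \<notin> M" shows "pmg (delete_edge G e) M"
proof
  show "simple_graph (delete_edge G e)" using sg
    by (auto simp: simple_graph_def delete_edge_def verts_def edges_def)
  show "perfect_matching (delete_edge G e) M" using pm assms
    by (auto simp: perfect_matching_def matching_def delete_edge_def verts_def edges_def)
qed


lemma del_alt:
  assumes alt: has_alt and xV: "x \<in> verts G" and yV: "y \<in> verts G" and ny: "y \<noteq> x" "y \<noteq> mate x"
    and A1: "{x, y} \<in> edges G" and A2: "{mate x, mate y} \<in> edges G"
    and ecase: "e = {x, mate y} \<or> e = {mate x, y}"
  shows "pmg.has_alt (delete_edge G e) M"
proof -
  have eM: "e \<notin> M"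
  proof
    assume "e \<in> M"
    then have "mate x = mate y \<or> mate (mate x) = y" using ecase mate_eq by metis
    then show False using ny mate_mate[OF xV] mate_inj[OF xV yV] by metis
  qed
  interpret H: pmg "delete_edge G e" M by (rule del_pmg[OF eM])
  have mm: "mate (mate x) = x" "mate (mate y) = y" using mate_mate xV yV by auto
  have neq: "mate x \<noteq> x" "mate y \<noteq> y" using mate_neq xV yV by auto
  have ny2: "mate y \<noteq> x" "mate y \<noteq> mate x" using ny mm by metis+
  have eA: "e \<noteq> {x, y}" "e \<noteq> {mate x, mate y}" using ecase ny ny2 neq by (auto simp: doubleton_eq_iff)
  have EH: "edges (delete_edge G e) = edges G - {e}" "verts (delete_edge G e) = verts G"
    by (auto simp: delete_edge_def verts_def edges_def)
  show ?thesis unfolding H.has_alt_def EH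
  proof (intro ballI impI)
    fix p q assume pV: "p \<in> verts G" and qV: "q \<in> verts G" and pq: "q \<noteq> p \<and> q \<noteq> mate p"
    have mp: "mate (mate p) = p" "mate (mate q) = q" using mate_mate pV qV by auto
    have inE: "{x, y} \<in> edges G" "{mate x, mate y} \<in> edges G" "{y, x} \<in> edges G" "{mate y, mate x} \<in> edges G"
      using A1 A2 by (auto simp: insert_commute)
    have neA: "{x, y} \<noteq> e" "{mate x, mate y} \<noteq> e" "{y, x} \<noteq> e" "{mate y, mate x} \<noteq> e"
      using eA by (auto simp: insert_commute)
    from alt[unfolded has_alt_def, rule_format, OF pV qV pq]
    consider (c1) "{p, q} \<in> edges G" "{mate p, mate q} \<in> edges G" | (c2) "{p, mate q} \<in> edges G" "{mate p, q} \<in> edges G"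
      by blast
    then show "({p, q} \<in> edges G - {e} \<and> {mate p, mate q} \<in> edges G - {e}) \<or>
               ({p, mate q} \<in> edges G - {e} \<and> {mate p, q} \<in> edges G - {e})"
    proof cases
      case c1
      show ?thesis
      proof (cases "e = {p, q} \<or> e = {mate p, mate q}")
        case False then show ?thesis using c1 by (metis DiffI singletonD)
      next
        case True
        then have "{p,q} = {x, mate y} \<or> {p,q} = {mate x, y} \<or> {mate p, mate q} = {x, mate y} \<or> {mate p, mate q} = {mate x, y}"
          using ecase by metis
        then have "(p = x \<and> q = mate y) \<or> (p = mate y \<and> q = x) \<or> (p = mate x \<and> q = y) \<or> (p = y \<and> q = mate x)"
          using mp mm by (elim disjE) (simp_all add: doubleton_eq_iff, metis+)
        then show ?thesis using inE neA by (elim disjE conjE; simp add: mm)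
      qed
    next
      case c2
      show ?thesis
      proof (cases "e = {p, mate q} \<or> e = {mate p, q}")
        case False then show ?thesis using c2 by (metis DiffI singletonD)
      next
        case True
        then have "{p, mate q} = {x, mate y} \<or> {p, mate q} = {mate x, y} \<or> {mate p, q} = {x, mate y} \<or> {mate p, q} = {mate x, y}"
          using ecase by metis
        then have "(p = x \<and> q = y) \<or> (p = mate y \<and> q = mate x) \<or> (p = mate x \<and> q = mate y) \<or> (p = y \<and> q = x)"
          using mp mm by (elim disjE) (simp_all add: doubleton_eq_iff, metis+)
        then show ?thesis using inE neA by (elim disjE conjE; simp add: mm)
      qed
    qed
  qed
qed

lemma xor:
  assumes alt: has_alt and n3: "card M \<ge> 3"
    and minl: "\<forall>e\<in>edges G. max_forcing_number (delete_edge G e) \<le> card M - 2"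
    and xV: "x \<in> verts G" and yV: "y \<in> verts G" and ny: "y \<noteq> x" "y \<noteq> mate x"
  shows "{x, y} \<in> edges G \<longleftrightarrow> {x, mate y} \<notin> edges G"
proof
  have contra: False if A1: "{x, b} \<in> edges G" and A2: "{mate x, mate b} \<in> edges G"
      and e: "e = {x, mate b} \<or> e = {mate x, b}" and eE: "e \<in> edges G"
      and bV: "b \<in> verts G" and nb: "b \<noteq> x" "b \<noteq> mate x" for b e
  proof -
    have eM: "e \<notin> M"
    proof
      assume "e \<in> M"
      then have "mate x = mate b \<or> mate (mate x) = b" using e mate_eq by metis
      then show False using nb mate_mate[OF xV] mate_inj[OF xV bV] by metis
    qed
    interpret H: pmg "delete_edge G e" M by (rule del_pmg[OF eM])
    have "H.has_alt" by (rule del_alt[OF alt xV bV nb A1 A2 e])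
    then have "forcing_number (delete_edge G e) M \<ge> card M - 1" by (rule H.fn_ge)
    moreover have "forcing_number (delete_edge G e) M \<le> max_forcing_number (delete_edge G e)"
      by (rule mfn_ge[OF H.sg H.pm])
    moreover have "max_forcing_number (delete_edge G e) \<le> card M - 2" using minl eE by blast
    ultimately show False using n3 by linarith
  qed
  have mm: "mate (mate x) = x" "mate (mate y) = y" using mate_mate xV yV by auto
  have myV: "mate y \<in> verts G" using mate_V yV by blast
  have ny2: "mate y \<noteq> x" "mate y \<noteq> mate x" using ny mm by metis+
  show "{x, mate y} \<notin> edges G" if a: "{x, y} \<in> edges G"
  proof
    assume b: "{x, mate y} \<in> edges G"
    from alt[unfolded has_alt_def, rule_format, OF xV yV] ny
    have "({x, y} \<in> edges G \<and> {mate x, mate y} \<in> edges G) \<or> ({x, mate y} \<in> edges G \<and> {mate x, y} \<in> edges G)" by blast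
    then show False
    proof
      assume c: "{x, y} \<in> edges G \<and> {mate x, mate y} \<in> edges G"
      show False by (rule contra[of y "{x, mate y}"]) (use c b yV ny in auto)
    next
      assume c: "{x, mate y} \<in> edges G \<and> {mate x, y} \<in> edges G"
      show False by (rule contra[of "mate y" "{x, y}"]) (use c a myV ny2 mm in auto)
    qed
  qed
  show "{x, y} \<in> edges G" if a: "{x, mate y} \<notin> edges G"
    using alt[unfolded has_alt_def, rule_format, OF xV yV] ny a by blast
qed

lemma not_ext:
  fixes u v :: "nat \<Rightarrow> 'a"
  assumes cV: "card (verts G) = 2 * n" and n3: "n \<ge> 3" and Mu: "M = (\<lambda>k. {u k, v k}) ` {1..n}"
    and indV: "independent_set G (v ` {1..n-1})" and indU: "independent_set G (u ` {1..n-1})"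
    and two: "has_two_indep_edges G (u ` {1..n} \<union> {v n})"
  shows "\<not> extendable 2 G"
proof
  assume ext: "extendable 2 G"
  have cM: "card M = n" using card_V cV by simp
  have inj: "inj_on (\<lambda>k. {u k, v k}) {1..n}"
    by (rule eq_card_imp_inj_on) (use cM Mu in auto)
  have fk: "{u k, v k} \<in> M" if "k \<in> {1..n}" for k using Mu that by blast
  have uvne: "u k \<noteq> v k" "u k \<in> verts G" "v k \<in> verts G" if "k \<in> {1..n}" for k
    using fk[OF that] M_E edge_not_loop edge_V by blast+
  have dkl: "{u k, v k} \<inter> {u l, v l} = {}" if "k \<in> {1..n}" "l \<in> {1..n}" "k \<noteq> l" for k l
  proof -
    have "{u k, v k} \<noteq> {u l, v l}" using inj that unfolding inj_on_def by blast
    then show ?thesis using M_disj fk that by blast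
  qed
  have neq: "u k \<noteq> u l" "v k \<noteq> v l" "u k \<noteq> v l" if "k \<in> {1..n}" "l \<in> {1..n}" "k \<noteq> l" for k l
    using dkl[OF that] by auto
  have nne: "n \<in> {1..n}" using n3 by simp
  have sub: "k \<in> {1..n-1} \<Longrightarrow> k \<in> {1..n}" for k by auto
  define U' where "U' = u ` {1..n-1}"
  define V' where "V' = v ` {1..n-1}"
  have injU: "inj_on u {1..n-1}" by (rule inj_onI) (metis neq(1) sub)
  have injV: "inj_on v {1..n-1}" by (rule inj_onI) (metis neq(2) sub)
  have cU: "card U' = n - 1" unfolding U'_def using card_image[OF injU] by simp
  have cV': "card V' = n - 1" unfolding V'_def using card_image[OF injV] by simp
  have n1: "{1..n} = insert n {1..n-1}" using n3 by auto
  have Un: "u ` {1..n} = insert (u n) U'" unfolding U'_def by (subst n1) simp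
  have V'dis: "w \<notin> U' \<and> w \<noteq> u n \<and> w \<noteq> v n" if wV': "w \<in> V'" for w
  proof -
    obtain k where k: "k \<in> {1..n-1}" "w = v k" using wV' unfolding V'_def by blast
    have kn: "k \<noteq> n" "k \<in> {1..n}" using k n3 by auto
    have "w \<notin> U'"
    proof
      assume "w \<in> U'"
      then obtain l where l: "l \<in> {1..n-1}" "w = u l" unfolding U'_def by blast
      show False
      proof (cases "k = l")
        case True then show False using uvne(1)[OF kn(2)] k l by simp
      next
        case False then show False using neq(3)[OF sub[OF l(1)] kn(2)] k l by metis
      qed
    qed
    moreover have "w \<noteq> u n" using neq(3)[OF nne kn(2) kn(1)[symmetric]] k by auto
    moreover have "w \<noteq> v n" using neq(2)[OF kn(2) nne kn(1)] k by auto
    ultimately show ?thesis by blast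
  qed
  have Vall: "verts G = U' \<union> V' \<union> {u n, v n}"
  proof -
    have "verts G = \<Union>M" using M_Un by simp
    also have "\<dots> = (\<Union>k\<in>{1..n}. {u k, v k})" using Mu by simp
    also have "\<dots> = U' \<union> V' \<union> {u n, v n}"
    proof
      show "(\<Union>k\<in>{1..n}. {u k, v k}) \<subseteq> U' \<union> V' \<union> {u n, v n}"
      proof
        fix w assume "w \<in> (\<Union>k\<in>{1..n}. {u k, v k})"
        then obtain k where k: "k \<in> {1..n}" "w = u k \<or> w = v k" by blast
        show "w \<in> U' \<union> V' \<union> {u n, v n}"
        proof (cases "k = n")
          case True then show ?thesis using k by auto
        next
          case False then have "k \<in> {1..n-1}" using k by auto
          then show ?thesis using k unfolding U'_def V'_def by auto
        qed
      qed
      show "U' \<union> V' \<union> {u n, v n} \<subseteq> (\<Union>k\<in>{1..n}. {u k, v k})"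
        unfolding U'_def V'_def using nne sub by fastforce
    qed
    finally show ?thesis .
  qed
  obtain e1 e2 where e: "e1 \<in> induced_edges G (u ` {1..n} \<union> {v n})" "e2 \<in> induced_edges G (u ` {1..n} \<union> {v n})"
    "e1 \<inter> e2 = {}" using two unfolding has_two_indep_edges_def by blast
  have eE: "e1 \<in> edges G" "e2 \<in> edges G" and eS: "e1 \<subseteq> U' \<union> {u n, v n}" "e2 \<subseteq> U' \<union> {u n, v n}"
    using e Un unfolding induced_edges_def by auto
  have c2: "card e1 = 2" "card e2 = 2" using eE edge_card by auto
  have e12: "e1 \<noteq> e2" using e(3) c2 by auto
  have mN: "matching G {e1, e2}" unfolding matching_def using eE e(3) by auto
  have cN: "card {e1, e2} = 2" using e12 by simp
  obtain M' where M': "perfect_matching G M'" "{e1, e2} \<subseteq> M'"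
    using ext mN cN unfolding extendable_def by blast
  have notU: "\<exists>a\<in>e. a \<notin> U'" if eE': "e \<in> edges G" for e
  proof (rule ccontr)
    assume "\<not> ?thesis"
    then have eU: "e \<subseteq> U'" by blast
    obtain p q where "e = {p, q}" using edge_card[OF eE'] by (auto simp: card_2_iff)
    then show False using indU eU eE' unfolding independent_set_def U'_def by auto
  qed
  obtain a where a: "a \<in> e1" "a \<notin> U'" using notU eE by blast
  obtain b where b: "b \<in> e2" "b \<notin> U'" using notU eE by blast
  have ab: "a \<in> {u n, v n}" "b \<in> {u n, v n}" "a \<noteq> b" using a b eS e(3) by auto
  define X where "X = e1 \<union> e2"
  have unX: "u n \<in> X" "v n \<in> X" using ab a b unfolding X_def by auto
  have cX: "card X = 4" unfolding X_def using c2 e(3) card_Un_disjoint[of e1 e2] eE edge_card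
    by (metis add_2_eq_Suc' card.infinite numeral_Bit0 numeral_One numeral_plus_numeral semiring_norm(2) zero_neq_numeral)
  have XS: "X \<subseteq> (U' \<inter> X) \<union> {u n, v n}" using eS unfolding X_def by auto
  have finU: "finite U'" unfolding U'_def by simp
  have "card X \<le> card (U' \<inter> X) + 2"
  proof -
    have "card X \<le> card ((U' \<inter> X) \<union> {u n, v n})" by (rule card_mono) (use finU XS in auto)
    also have "\<dots> \<le> card (U' \<inter> X) + card {u n, v n}" by (rule card_Un_le)
    also have "\<dots> \<le> card (U' \<inter> X) + 2" by (simp add: card_insert_le_m1)
    finally show ?thesis .
  qed
  then have cUX: "card (U' \<inter> X) \<ge> 2" using cX by simp
  define p where "p w = (SOME t. {w, t} \<in> M')" for w
  have pw: "{w, p w} \<in> M'" if "w \<in> verts G" for w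
    unfolding p_def using pm'_partner[OF M'(1) that] by (rule someI_ex)
  have V'V: "V' \<subseteq> verts G" using indV unfolding V'_def independent_set_def by blast
  have pin: "p w \<in> U' - X" if w: "w \<in> V'" for w
  proof -
    have wV: "w \<in> verts G" using V'V w by blast
    have pE: "{w, p w} \<in> edges G" using pw[OF wV] pm'_edge[OF M'(1)] by blast
    have pV: "p w \<in> verts G" using pE edge_V by blast
    have "p w \<notin> V'" using indV w pE unfolding independent_set_def V'_def by blast
    moreover have "p w \<notin> X"
    proof
      assume "p w \<in> X"
      then obtain e where e': "e \<in> {e1, e2}" "p w \<in> e" unfolding X_def by blast
      have eM': "e \<in> M'" using e' M' by blast
      have "card e = 2" using e' c2 by auto
      then obtain c where ec: "e = {p w, c}" using e'(2) by (auto simp: card_2_iff)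
      have "{p w, w} \<in> M'" using pw[OF wV] by (simp add: insert_commute)
      then have "c = w" using pm'_uniq[OF M'(1)] eM' ec by metis
      then have "w \<in> X" using e' ec unfolding X_def by auto
      then have "w \<in> U' \<union> {u n, v n}" using eS unfolding X_def by auto
      then show False using V'dis[OF w] by blast
    qed
    ultimately show ?thesis using pV Vall unX by auto
  qed
  have injp: "inj_on p V'"
  proof (rule inj_onI)
    fix w1 w2 assume w: "w1 \<in> V'" "w2 \<in> V'" "p w1 = p w2"
    have "{w1, p w1} \<in> M'" "{w2, p w2} \<in> M'" using pw V'V w(1,2) by auto
    then have "{p w1, w1} \<in> M'" "{p w1, w2} \<in> M'" using w(3) by (simp_all add: insert_commute)
    then show "w1 = w2" using pm'_uniq[OF M'(1)] by blast
  qed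
  have "card V' \<le> card (U' - X)"
    by (rule card_inj_on_le[OF injp]) (use pin finU in auto)
  also have "\<dots> = card U' - card (U' \<inter> X)" using finU by (simp add: card_Diff_subset_Int Int_commute)
  finally show False using cU cV' cUX n3 by linarith
qed

end

locale str = pmg +
  assumes xor_ax: "\<And>x y. x \<in> verts G \<Longrightarrow> y \<in> verts G \<Longrightarrow> y \<noteq> x \<Longrightarrow> y \<noteq> mate x \<Longrightarrow>
     {x, y} \<in> edges G \<longleftrightarrow> {x, mate y} \<notin> edges G"
begin

definition df :: "'a \<Rightarrow> 'a \<Rightarrow> bool" where
  "df a b \<longleftrightarrow> a \<in> verts G \<and> b \<in> verts G \<and> b \<noteq> a \<and> b \<noteq> mate a"

lemma df_ineq:
  assumes "df a b"
  shows "a \<noteq> b" "b \<noteq> a" "a \<noteq> mate b" "mate b \<noteq> a" "mate a \<noteq> b" "b \<noteq> mate a"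
    "mate a \<noteq> mate b" "mate b \<noteq> mate a" "a \<noteq> mate a" "mate a \<noteq> a" "b \<noteq> mate b" "mate b \<noteq> b"
proof -
  have V: "a \<in> verts G" "b \<in> verts G" and n: "b \<noteq> a" "b \<noteq> mate a" using assms by (auto simp: df_def)
  have mm: "mate (mate a) = a" "mate (mate b) = b" using mate_mate V by auto
  have mn: "mate a \<noteq> a" "mate b \<noteq> b" using mate_neq V by auto
  show "a \<noteq> b" "b \<noteq> a" "mate a \<noteq> b" "b \<noteq> mate a" "a \<noteq> mate a" "mate a \<noteq> a" "b \<noteq> mate b" "mate b \<noteq> b"
    using n mn by auto
  show "a \<noteq> mate b" "mate b \<noteq> a" using n mm by metis+
  show "mate a \<noteq> mate b" "mate b \<noteq> mate a" using n mate_inj V by metis+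
qed

lemma df_sym: "df a b \<Longrightarrow> df b a"
  using df_ineq unfolding df_def by metis

lemma df_mate: "df a b \<Longrightarrow> df a (mate b)" "df a b \<Longrightarrow> df (mate a) b"
  using df_ineq mate_V mate_mate unfolding df_def by metis+

lemma xor: "df x y \<Longrightarrow> {x, y} \<in> edges G \<longleftrightarrow> {x, mate y} \<notin> edges G"
  using xor_ax unfolding df_def by blast

lemma F2: assumes "{a, b} \<in> edges G" "df a b" shows "{mate a, mate b} \<in> edges G"
proof -
  have "{a, mate b} \<notin> edges G" using xor assms by blast
  moreover have "df (mate b) a" using df_sym df_mate assms(2) by blast
  ultimately have "{mate b, mate a} \<in> edges G" using xor[of "mate b" a] by (simp add: insert_commute)
  then show ?thesis by (simp add: insert_commute)
qed

lemma edge_df: "{a, b} \<in> edges G \<Longrightarrow> b \<noteq> mate a \<Longrightarrow> df a b"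
  using edge_V edge_not_loop unfolding df_def by blast

lemma pairs_disj:
  assumes "distinct (concat (map (\<lambda>(a, b). [a, b]) ps))" "c \<in> set ps" "d \<in> set ps" "c \<noteq> d"
  shows "(\<lambda>(a, b). {a, b}) c \<inter> (\<lambda>(a, b). {a, b}) d = {}"
proof -
  obtain a1 b1 a2 b2 where cd: "c = (a1, b1)" "d = (a2, b2)" by (cases c, cases d) auto
  have "[a1, b1] \<in> set (map (\<lambda>(a, b). [a, b]) ps)" "[a2, b2] \<in> set (map (\<lambda>(a, b). [a, b]) ps)"
    using assms(2,3) cd by force+
  moreover have "[a1, b1] \<noteq> [a2, b2]" using assms(4) cd by auto
  ultimately have "set [a1, b1] \<inter> set [a2, b2] = {}"
    using assms(1) unfolding distinct_concat_iff by blast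
  then show ?thesis using cd by simp
qed

lemma ext_by:
  assumes ws: "set ws \<subseteq> verts G" and ps: "\<forall>(a, b)\<in>set ps. {a, b} \<in> edges G"
    and dis: "distinct (concat (map (\<lambda>(a, b). [a, b]) ps))"
    and cov: "set (concat (map (\<lambda>(a, b). [a, b]) ps)) = set ws \<union> mate ` set ws"
  shows "perfect_matching G ((M - (\<lambda>w. {w, mate w}) ` set ws) \<union> (\<lambda>(a, b). {a, b}) ` set ps)"
proof (rule swap_pm)
  show "(\<lambda>w. {w, mate w}) ` set ws \<subseteq> M" using ws mate_M by auto
  show "(\<lambda>(a, b). {a, b}) ` set ps \<subseteq> edges G" using ps by auto
  show "a \<inter> b = {}" if ab: "a \<in> (\<lambda>(a, b). {a, b}) ` set ps" "b \<in> (\<lambda>(a, b). {a, b}) ` set ps" "a \<noteq> b" for a b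
  proof -
    obtain c d where cd: "c \<in> set ps" "d \<in> set ps" "a = (\<lambda>(a, b). {a, b}) c" "b = (\<lambda>(a, b). {a, b}) d"
      using ab(1,2) by blast
    have "c \<noteq> d" using cd ab(3) by metis
    then show ?thesis using pairs_disj[OF dis cd(1,2)] cd(3,4) by simp
  qed
  have "\<Union> ((\<lambda>(a, b). {a, b}) ` set ps) = set (concat (map (\<lambda>(a, b). [a, b]) ps))" by auto
  also have "\<dots> = \<Union> ((\<lambda>w. {w, mate w}) ` set ws)" using cov by auto
  finally show "\<Union> ((\<lambda>(a, b). {a, b}) ` set ps) = \<Union> ((\<lambda>w. {w, mate w}) ` set ws)" .
qed

definition ext2 :: "'a set \<Rightarrow> 'a set \<Rightarrow> bool" where
  "ext2 e f \<longleftrightarrow> (\<exists>M'. perfect_matching G M' \<and> e \<in> M' \<and> f \<in> M')"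

lemma ext_by2:
  assumes ws: "set ws \<subseteq> verts G" and ps: "\<forall>(a, b)\<in>set ps. {a, b} \<in> edges G"
    and dis: "distinct (concat (map (\<lambda>(a, b). [a, b]) ps))"
    and cov: "set (concat (map (\<lambda>(a, b). [a, b]) ps)) = set ws \<union> mate ` set ws"
    and ef: "e \<in> (\<lambda>(a, b). {a, b}) ` set ps" "f \<in> (\<lambda>(a, b). {a, b}) ` set ps"
  shows "ext2 e f"
proof -
  let ?M' = "(M - (\<lambda>w. {w, mate w}) ` set ws) \<union> (\<lambda>(a, b). {a, b}) ` set ps"
  have "perfect_matching G ?M'" by (rule ext_by[OF ws ps dis cov])
  moreover have "e \<in> ?M'" using ef(1) by (rule UnI2)
  moreover have "f \<in> ?M'" using ef(2) by (rule UnI2)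
  ultimately show ?thesis unfolding ext2_def by (intro exI[of _ ?M'] conjI)
qed

lemma memI: "(a, b) \<in> set ps \<Longrightarrow> {a, b} \<in> (\<lambda>(a, b). {a, b}) ` set ps"
  by (rule image_eqI[where x="(a, b)"]) auto

lemma dfV: "df a b \<Longrightarrow> a \<in> verts G" "df a b \<Longrightarrow> b \<in> verts G" by (auto simp: df_def)

lemma d2core:
  assumes dxy: "df x y" and e1: "{x, y} \<in> edges G" and e2: "{mate x, z} \<in> edges G"
    and zx: "z \<noteq> x" and zy: "z \<noteq> y" and ne: "\<not> ext2 {x, y} {mate x, z}"
  shows "\<exists>x y z. df x y \<and> df x z \<and> df y z \<and> {x, y} \<in> edges G \<and> {mate x, z} \<in> edges G \<and>
     {mate y, z} \<in> edges G \<and> \<not> ext2 {x, y} {mate x, z}"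
proof -
  have xV: "x \<in> verts G" and yV: "y \<in> verts G" using dxy dfV by auto
  have zV: "z \<in> verts G" using e2 edge_V by blast
  have mxz: "z \<noteq> mate x" using e2 edge_not_loop by metis
  have dxz: "df x z" using xV zV zx mxz by (auto simp: df_def)
  have mm: "mate (mate x) = x" "mate (mate y) = y" "mate (mate z) = z" using mate_mate xV yV zV by auto
  note i1 = df_ineq[OF dxy] and i2 = df_ineq[OF dxz]
  have zmy: "z \<noteq> mate y"
  proof
    assume zm: "z = mate y"
    have "ext2 {x, y} {mate x, z}"
    proof (rule ext_by2[of "[x, y]" "[(x, y), (mate x, mate y)]"])
      show "set [x, y] \<subseteq> verts G" using xV yV by simp
      show "\<forall>(a, b)\<in>set [(x, y), (mate x, mate y)]. {a, b} \<in> edges G" using e1 e2 zm by simp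
      show "distinct (concat (map (\<lambda>(a, b). [a, b]) [(x, y), (mate x, mate y)]))" using i1 by auto
      show "set (concat (map (\<lambda>(a, b). [a, b]) [(x, y), (mate x, mate y)])) = set [x, y] \<union> mate ` set [x, y]" by auto
    qed (rule memI, simp add: zm)+
    then show False using ne by blast
  qed
  have dyz: "df y z" using yV zV zy zmy by (auto simp: df_def)
  note i3 = df_ineq[OF dyz]
  have dmyz: "df (mate y) z" using df_mate(2)[OF dyz] .
  have "{mate y, z} \<in> edges G"
  proof (rule ccontr)
    assume "{mate y, z} \<notin> edges G"
    then have e3: "{mate y, mate z} \<in> edges G" using xor[OF dmyz] by blast
    have "ext2 {x, y} {mate x, z}"
    proof (rule ext_by2[of "[x, y, z]" "[(x, y), (mate x, z), (mate y, mate z)]"])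
      show "set [x, y, z] \<subseteq> verts G" using xV yV zV by simp
      show "\<forall>(a, b)\<in>set [(x, y), (mate x, z), (mate y, mate z)]. {a, b} \<in> edges G" using e1 e2 e3 by simp
      show "distinct (concat (map (\<lambda>(a, b). [a, b]) [(x, y), (mate x, z), (mate y, mate z)]))" using i1 i2 i3 by auto
      show "set (concat (map (\<lambda>(a, b). [a, b]) [(x, y), (mate x, z), (mate y, mate z)])) = set [x, y, z] \<union> mate ` set [x, y, z]" by auto
    qed (rule memI, simp)+
    then show False using ne by blast
  qed
  then show ?thesis using dxy dxz dyz e1 e2 ne by blast
qed

lemma ext2_sym: "ext2 e f \<Longrightarrow> ext2 f e" unfolding ext2_def by blast

lemma caseB:
  assumes pV: "p \<in> verts G" and rs: "{r, s} \<in> edges G" "s \<noteq> mate r"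
    and pn: "p \<noteq> r" "p \<noteq> s" "mate p \<noteq> r" "mate p \<noteq> s"
  shows "ext2 {p, mate p} {r, s}"
proof -
  have drs: "df r s" using edge_df rs by blast
  have rV: "r \<in> verts G" and sV: "s \<in> verts G" using drs dfV by auto
  have mm: "mate (mate p) = p" "mate (mate r) = r" "mate (mate s) = s" using mate_mate pV rV sV by auto
  have dpr: "df p r" "df p s" using pV rV sV pn mm unfolding df_def by metis+
  note i1 = df_ineq[OF drs] and i2 = df_ineq[OF dpr(1)] and i3 = df_ineq[OF dpr(2)]
  have e3: "{mate r, mate s} \<in> edges G" using F2 rs drs by blast
  show ?thesis
  proof (rule ext_by2[of "[p, r, s]" "[(p, mate p), (r, s), (mate r, mate s)]"])
    show "set [p, r, s] \<subseteq> verts G" using pV rV sV by simp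
    show "\<forall>(a, b)\<in>set [(p, mate p), (r, s), (mate r, mate s)]. {a, b} \<in> edges G" using rs e3 vE[OF pV] by simp
    show "distinct (concat (map (\<lambda>(a, b). [a, b]) [(p, mate p), (r, s), (mate r, mate s)]))" using i1 i2 i3 by auto
    show "set (concat (map (\<lambda>(a, b). [a, b]) [(p, mate p), (r, s), (mate r, mate s)])) = set [p, r, s] \<union> mate ` set [p, r, s]" by auto
  qed (rule memI, simp)+
qed

lemma config:
  assumes mN: "matching G N" "card N = 2" and ne: "\<forall>M'. perfect_matching G M' \<longrightarrow> \<not> N \<subseteq> M'"
  shows "\<exists>x y z. df x y \<and> df x z \<and> df y z \<and> {x, y} \<in> edges G \<and> {mate x, z} \<in> edges G \<and>
     {mate y, z} \<in> edges G \<and> \<not> ext2 {x, y} {mate x, z}"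
proof -
  obtain e f where N: "N = {e, f}" "e \<noteq> f" using mN(2) by (auto simp: card_2_iff)
  have eE: "e \<in> edges G" and fE: "f \<in> edges G" and dj: "e \<inter> f = {}"
    using mN(1) N unfolding matching_def by auto
  have ne2: "\<not> ext2 e f" using ne N unfolding ext2_def by blast
  obtain p q where pq: "e = {p, q}" "p \<noteq> q" using edge_card[OF eE] by (auto simp: card_2_iff)
  obtain r s where rs: "f = {r, s}" "r \<noteq> s" using edge_card[OF fE] by (auto simp: card_2_iff)
  have djs: "p \<noteq> r" "p \<noteq> s" "q \<noteq> r" "q \<noteq> s" using dj pq rs by auto
  have pV: "p \<in> verts G" "q \<in> verts G" using eE pq edge_V by auto
  have rV: "r \<in> verts G" "s \<in> verts G" using fE rs edge_V by auto
  have mm: "mate (mate p) = p" "mate (mate q) = q" "mate (mate r) = r" "mate (mate s) = s"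
    using mate_mate pV rV by auto
  have epq: "{p, q} \<in> edges G" and ers: "{r, s} \<in> edges G" using eE fE pq rs by auto
  show ?thesis
  proof (cases "q = mate p")
    case qA: True
    show ?thesis
    proof (cases "s = mate r")
      case True
      have "ext2 e f" unfolding ext2_def
        by (rule exI[of _ M]) (use pm mate_M pV rV qA True pq rs in simp)
      then show ?thesis using ne2 by blast
    next
      case False
      have "ext2 {p, mate p} {r, s}"
        by (rule caseB[OF pV(1) ers False]) (use djs qA mm in metis)+
      then show ?thesis using ne2 pq rs qA by simp
    qed
  next
    case qB: False
    show ?thesis
    proof (cases "s = mate r")
      case True
      have "ext2 {r, mate r} {p, q}"
        by (rule caseB[OF rV(1) epq qB]) (use djs True mm in metis)+
      then show ?thesis using ne2 pq rs True ext2_sym by simp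
    next
      case sB: False
      have dpq: "df p q" using edge_df epq qB by blast
      have drs: "df r s" using edge_df ers sB by blast
      show ?thesis
      proof (cases "r = mate p")
        case True
        show ?thesis by (rule d2core[OF dpq epq]) (use ers True djs ne2 pq rs in \<open>simp_all add: insert_commute\<close>)
      next
        case r1: False
        show ?thesis
        proof (cases "r = mate q")
          case True
          show ?thesis by (rule d2core[OF df_sym[OF dpq]]) (use epq ers True djs ne2 pq rs in \<open>simp_all add: insert_commute\<close>)
        next
          case r2: False
          show ?thesis
          proof (cases "s = mate p")
            case True
            show ?thesis by (rule d2core[OF dpq epq]) (use ers True djs ne2 pq rs in \<open>simp_all add: insert_commute\<close>)
          next
            case s1: False
            show ?thesis
            proof (cases "s = mate q")
              case True
              show ?thesis by (rule d2core[OF df_sym[OF dpq]]) (use epq ers True djs ne2 pq rs in \<open>simp_all add: insert_commute\<close>)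
            next
              case s2: False
              have d: "df p r" "df p s" "df q r" "df q s" using pV rV djs r1 r2 s1 s2 unfolding df_def by auto
              note i = df_ineq[OF dpq] df_ineq[OF drs] df_ineq[OF d(1)] df_ineq[OF d(2)] df_ineq[OF d(3)] df_ineq[OF d(4)]
              have e3: "{mate p, mate q} \<in> edges G" "{mate r, mate s} \<in> edges G" using F2 epq ers dpq drs by auto
              have "ext2 {p, q} {r, s}"
              proof (rule ext_by2[of "[p, q, r, s]" "[(p, q), (mate p, mate q), (r, s), (mate r, mate s)]"])
                show "set [p, q, r, s] \<subseteq> verts G" using pV rV by simp
                show "\<forall>(a, b)\<in>set [(p, q), (mate p, mate q), (r, s), (mate r, mate s)]. {a, b} \<in> edges G"
                  using epq ers e3 by simp
                show "distinct (concat (map (\<lambda>(a, b). [a, b]) [(p, q), (mate p, mate q), (r, s), (mate r, mate s)]))"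
                  using i by auto
                show "set (concat (map (\<lambda>(a, b). [a, b]) [(p, q), (mate p, mate q), (r, s), (mate r, mate s)])) =
                      set [p, q, r, s] \<union> mate ` set [p, q, r, s]" by auto
              qed (rule memI, simp)+
              then show ?thesis using ne2 pq rs by simp
            qed
          qed
        qed
      qed
    qed
  qed
qed

lemma C4:
  assumes d: "df a b"
  shows "induced_C4 G {a, mate a, b, mate b}"
proof -
  have aV: "a \<in> verts G" and bV: "b \<in> verts G" using d dfV by auto
  note i = df_ineq[OF d]
  have ea: "{a, mate a} \<in> edges G" "{b, mate b} \<in> edges G" using vE aV bV by auto
  have key: "induced_C4 G {a, mate a, b, mate b}"
    if e1: "{a, c} \<in> edges G" "{mate a, mate c} \<in> edges G" and n1: "{a, mate c} \<notin> edges G" "{mate a, c} \<notin> edges G"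
      and c: "c = b \<or> c = mate b" for c
  proof -
    have cV: "c \<in> verts G" using c bV mate_V by auto
    have mc: "mate (mate c) = c" using mate_mate cV by blast
    have cm: "{c, mate c} \<in> edges G" using vE cV by blast
    have S: "{a, mate a, b, mate b} = {a, c, mate c, mate a}" using c mate_mate bV by auto
    have dc: "distinct [a, c, mate c, mate a]" using c i mate_mate bV by auto
    have n2: "{mate c, a} \<notin> edges G" "{c, mate a} \<notin> edges G" using n1 by (auto simp: insert_commute)
    have "induced_edges G {a, c, mate c, mate a} = {{a, c}, {c, mate c}, {mate c, mate a}, {mate a, a}}"
    proof (rule set_eqI, rule iffI)
      fix e assume "e \<in> induced_edges G {a, c, mate c, mate a}"
      then have eE: "e \<in> edges G" and eS: "e \<subseteq> {a, c, mate c, mate a}" by (auto simp: induced_edges_def)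
      obtain p q where pq: "e = {p, q}" "p \<noteq> q" using edge_card[OF eE] by (auto simp: card_2_iff)
      have "p \<in> {a, c, mate c, mate a}" "q \<in> {a, c, mate c, mate a}" using eS pq by auto
      then show "e \<in> {{a, c}, {c, mate c}, {mate c, mate a}, {mate a, a}}"
        using pq eE n1 n2 by (auto simp: insert_commute)
    next
      fix e assume "e \<in> {{a, c}, {c, mate c}, {mate c, mate a}, {mate a, a}}"
      then show "e \<in> induced_edges G {a, c, mate c, mate a}"
        using e1 cm ea by (auto simp: induced_edges_def insert_commute)
    qed
    then show ?thesis unfolding induced_C4_def S using dc by blast
  qed
  show ?thesis
  proof (cases "{a, b} \<in> edges G")
    case True
    have "{mate a, mate b} \<in> edges G" using F2 True d by blast
    moreover have "{a, mate b} \<notin> edges G" using xor[OF d] True by blast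
    moreover have "{mate a, b} \<notin> edges G"
      using xor[OF df_mate(2)[OF d]] \<open>{mate a, mate b} \<in> edges G\<close> by blast
    ultimately show ?thesis using key[of b] True by blast
  next
    case False
    have e: "{a, mate b} \<in> edges G" using xor[OF d] False by blast
    have dm: "df a (mate b)" using df_mate(1)[OF d] .
    have "{mate a, mate (mate b)} \<in> edges G" using F2[OF e dm] .
    then have e2: "{mate a, b} \<in> edges G" using mate_mate bV by simp
    have n: "{mate a, mate b} \<notin> edges G" using xor[OF df_mate(2)[OF d]] e2 by blast
    show ?thesis using key[of "mate b"] e e2 False n mate_mate bV by (simp add: insert_commute)
  qed
qed

lemma conn: "connected_graph G"
  unfolding connected_graph_def
proof (intro ballI)
  fix a b assume aV: "a \<in> verts G" and bV: "b \<in> verts G"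
  have adjE: "adj G p q" if "{p, q} \<in> edges G" for p q using that by (simp add: adj_def)
  show "(adj G)\<^sup>*\<^sup>* a b"
  proof (cases "b = a")
    case True then show ?thesis by simp
  next
    case ba: False
    show ?thesis
    proof (cases "b = mate a")
      case True then show ?thesis using adjE vE[OF aV] by (simp add: r_into_rtranclp)
    next
      case False
      then have d: "df a b" using aV bV ba unfolding df_def by auto
      show ?thesis
      proof (cases "{a, b} \<in> edges G")
        case True then show ?thesis using adjE by (simp add: r_into_rtranclp)
      next
        case nab: False
        then have "{a, mate b} \<in> edges G" using xor[OF d] by blast
        moreover have "{mate b, b} \<in> edges G" using vE[OF bV] by (simp add: insert_commute)
        ultimately show ?thesis using adjE
          by (meson converse_rtranclp_into_rtranclp r_into_rtranclp)
      qed
    qed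
  qed
qed

end

locale cfg = str +
  fixes x y z
  assumes dxy: "df x y" and dxz: "df x z" and dyz: "df y z"
    and exy: "{x, y} \<in> edges G" and exz: "{mate x, z} \<in> edges G" and eyz: "{mate y, z} \<in> edges G"
    and nex: "\<not> ext2 {x, y} {mate x, z}"
begin

lemma xyzV: "x \<in> verts G" "y \<in> verts G" "z \<in> verts G" using dxy dyz dfV by auto

lemma mm_all: "a \<in> verts G \<Longrightarrow> mate (mate a) = a" by (rule mate_mate)

lemma NP1:
  assumes w: "df x w" "df y w" "df z w" and e1: "{mate y, w} \<in> edges G" and e2: "{mate w, mate z} \<in> edges G"
  shows False
proof -
  have wV: "w \<in> verts G" using w dfV by auto
  note i = df_ineq[OF dxy] df_ineq[OF dxz] df_ineq[OF dyz] df_ineq[OF w(1)] df_ineq[OF w(2)] df_ineq[OF w(3)]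
  have "ext2 {x, y} {mate x, z}"
  proof (rule ext_by2[of "[x, y, z, w]" "[(x, y), (mate x, z), (mate y, w), (mate w, mate z)]"])
    show "set [x, y, z, w] \<subseteq> verts G" using xyzV wV by simp
    show "\<forall>(a, b)\<in>set [(x, y), (mate x, z), (mate y, w), (mate w, mate z)]. {a, b} \<in> edges G"
      using exy exz e1 e2 by simp
    show "distinct (concat (map (\<lambda>(a, b). [a, b]) [(x, y), (mate x, z), (mate y, w), (mate w, mate z)]))"
      using i by auto
    show "set (concat (map (\<lambda>(a, b). [a, b]) [(x, y), (mate x, z), (mate y, w), (mate w, mate z)])) =
          set [x, y, z, w] \<union> mate ` set [x, y, z, w]" by auto
  qed (rule memI, simp)+
  then show False using nex by blast
qed

lemma NP2:
  assumes w: "df x w" "df y w" "df z w" and t: "df x t" "df y t" "df z t" and wt: "df w t"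
    and e1: "{mate y, w} \<in> edges G" and e2: "{mate w, t} \<in> edges G" and e3: "{mate t, mate z} \<in> edges G"
  shows False
proof -
  have wV: "w \<in> verts G" "t \<in> verts G" using w t dfV by auto
  note i = df_ineq[OF dxy] df_ineq[OF dxz] df_ineq[OF dyz] df_ineq[OF w(1)] df_ineq[OF w(2)] df_ineq[OF w(3)]
    df_ineq[OF t(1)] df_ineq[OF t(2)] df_ineq[OF t(3)] df_ineq[OF wt]
  have "ext2 {x, y} {mate x, z}"
  proof (rule ext_by2[of "[x, y, z, w, t]" "[(x, y), (mate x, z), (mate y, w), (mate w, t), (mate t, mate z)]"])
    show "set [x, y, z, w, t] \<subseteq> verts G" using xyzV wV by simp
    show "\<forall>(a, b)\<in>set [(x, y), (mate x, z), (mate y, w), (mate w, t), (mate t, mate z)]. {a, b} \<in> edges G"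
      using exy exz e1 e2 e3 by simp
    show "distinct (concat (map (\<lambda>(a, b). [a, b]) [(x, y), (mate x, z), (mate y, w), (mate w, t), (mate t, mate z)]))"
      using i by auto
    show "set (concat (map (\<lambda>(a, b). [a, b]) [(x, y), (mate x, z), (mate y, w), (mate w, t), (mate t, mate z)])) =
          set [x, y, z, w, t] \<union> mate ` set [x, y, z, w, t]" by auto
  qed (rule memI, simp)+
  then show False using nex by blast
qed

definition isU :: "'a \<Rightarrow> bool" where
  "isU w \<longleftrightarrow> w = y \<or> (df y w \<and> {y, w} \<notin> edges G)"

lemma isU_y: "isU y" by (simp add: isU_def)

lemma not_isU_my: "\<not> isU (mate y)"
  using df_ineq[OF dxy] unfolding isU_def df_def by auto

lemma isU_z: "isU z"
proof -
  have "{y, mate z} \<in> edges G" using F2[OF eyz] df_mate(2)[OF dyz] mate_mate xyzV by auto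
  then have "{y, z} \<notin> edges G" using xor[OF dyz] by blast
  then show ?thesis using dyz unfolding isU_def by blast
qed

lemma U_xor: assumes "df x a" shows "isU a \<longleftrightarrow> \<not> isU (mate a)"
proof -
  have aV: "a \<in> verts G" using assms dfV by auto
  have ma: "mate (mate a) = a" using mate_mate aV by auto
  show ?thesis
  proof (cases "a = y")
    case True then show ?thesis using isU_y not_isU_my by simp
  next
    case ay: False
    show ?thesis
    proof (cases "a = mate y")
      case True then show ?thesis using isU_y not_isU_my mate_mate xyzV by simp
    next
      case False
      then have dya: "df y a" using ay aV xyzV unfolding df_def by auto
      have dyma: "df y (mate a)" using df_mate(1)[OF dya] .
      have "mate a \<noteq> y" using df_ineq[OF dya] by auto
      then show ?thesis using xor[OF dya] dya dyma ay unfolding isU_def by auto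
    qed
  qed
qed

lemma claimA:
  assumes t: "df x t" "df y t" "df z t" and e: "{mate y, t} \<in> edges G"
  shows "{mate t, z} \<in> edges G" "{t, mate z} \<in> edges G"
proof -
  have "{mate t, mate z} \<notin> edges G" using NP1[OF t e] by blast
  moreover have "df (mate t) z" using df_mate(2)[OF df_sym[OF t(3)]] .
  ultimately show c: "{mate t, z} \<in> edges G" using xor by blast
  have "{mate (mate t), mate z} \<in> edges G" using F2[OF c] df_mate(2)[OF df_sym[OF t(3)]] by blast
  then show "{t, mate z} \<in> edges G" using mate_mate t dfV by auto
qed

lemma L:
  assumes w: "df x w" and t: "df x t" and wt: "df w t" and nw: "\<not> isU w" and ut: "isU t"
  shows "{w, t} \<in> edges G"
proof -
  have wV: "w \<in> verts G" and tV: "t \<in> verts G" using w t dfV by auto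
  have my: "mate (mate y) = y" "mate (mate z) = z" "mate (mate w) = w" "mate (mate t) = t"
    using mate_mate xyzV wV tV by auto
  have wy: "w \<noteq> y" using nw isU_y by blast
  have tmy: "t \<noteq> mate y" using ut not_isU_my by blast
  show ?thesis
  proof (cases "w = mate y")
    case True
    have "t \<noteq> y" using wt True my df_ineq[OF wt] by metis
    then have dyt: "df y t" using tV xyzV tmy unfolding df_def by auto
    have "{y, t} \<notin> edges G" using ut \<open>t \<noteq> y\<close> unfolding isU_def by blast
    then have "{t, mate y} \<in> edges G" using xor[OF df_sym[OF dyt]] by (simp add: insert_commute)
    then show ?thesis using True by (simp add: insert_commute)
  next
    case wmy: False
    have dyw: "df y w" using wV xyzV wy wmy unfolding df_def by auto
    have eyw: "{y, w} \<in> edges G" using nw dyw unfolding isU_def by blast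
    show ?thesis
    proof (cases "t = y")
      case True then show ?thesis using eyw by (simp add: insert_commute)
    next
      case ty: False
      have dyt: "df y t" using tV xyzV ty tmy unfolding df_def by auto
      have "{y, t} \<notin> edges G" using ut ty unfolding isU_def by blast
      then have emyt: "{mate y, t} \<in> edges G" using xor[OF df_sym[OF dyt]] by (simp add: insert_commute)
      have wz: "w \<noteq> z" using nw isU_z by blast
      have tmz: "t \<noteq> mate z" using ut U_xor[OF dxz] isU_z by blast
      show ?thesis
      proof (cases "w = mate z")
        case True
        have "t \<noteq> z" using wt True my df_ineq[OF wt] by metis
        then have dzt: "df z t" using tV xyzV tmz unfolding df_def by auto
        show ?thesis using claimA(1)[OF t dyt dzt emyt] True F2 claimA(2)[OF t dyt dzt emyt]
          by (simp add: insert_commute)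
      next
        case wmz: False
        have dzw: "df z w" using wV xyzV wz wmz unfolding df_def by auto
        have emyw: "{mate y, mate w} \<in> edges G" using F2[OF eyw dyw] .
        have dmw: "df x (mate w)" "df y (mate w)" "df z (mate w)" using df_mate(1) w dyw dzw by auto
        show ?thesis
        proof (cases "t = z")
          case True
          show ?thesis using claimA(1)[OF dmw emyw] my True by simp
        next
          case tz: False
          have dzt: "df z t" using tV xyzV tz tmz unfolding df_def by auto
          show ?thesis
          proof (rule ccontr)
            assume "{w, t} \<notin> edges G"
            then have ewmt: "{w, mate t} \<in> edges G" using xor[OF wt] by blast
            have etmz: "{t, mate z} \<in> edges G" using claimA(2)[OF t dyt dzt emyt] .
            have dwt': "df (mate w) (mate t)" using df_mate wt by blast
            have dmt: "df x (mate t)" "df y (mate t)" "df z (mate t)" using df_mate(1) t dyt dzt by auto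
            show False
              by (rule NP2[OF dmw dmt dwt' emyw]) (use ewmt etmz my in auto)
          qed
        qed
      qed
    qed
  qed
qed

lemma edge_iff:
  assumes w: "df x w" and t: "df x t" and wt: "df w t"
  shows "{w, t} \<in> edges G \<longleftrightarrow> isU w \<noteq> isU t"
proof (cases "isU w = isU t")
  case False
  then show ?thesis
  proof (cases "isU t")
    case True then show ?thesis using L[OF w t wt] False by simp
  next
    case nt: False
    then have "{t, w} \<in> edges G" using L[OF t w df_sym[OF wt]] False by simp
    then show ?thesis using False by (simp add: insert_commute)
  qed
next
  case True
  have wV: "w \<in> verts G" and tV: "t \<in> verts G" using w t dfV by auto
  show ?thesis
  proof (cases "isU t")
    case ut: True
    have "\<not> isU (mate w)" using U_xor[OF w] True ut by simp
    moreover have d1: "df x (mate w)" "df (mate w) t" using df_mate w wt by auto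
    ultimately have "{mate w, t} \<in> edges G" using L[OF d1(1) t d1(2)] ut by blast
    then have "{t, mate w} \<in> edges G" by (simp add: insert_commute)
    then have "{t, w} \<notin> edges G" using xor[OF df_sym[OF wt]] mate_mate wV by auto
    then show ?thesis using True by (simp add: insert_commute)
  next
    case nt: False
    have "isU (mate t)" using U_xor[OF t] nt by simp
    moreover have "\<not> isU w" using True nt by simp
    moreover have d1: "df x (mate t)" "df w (mate t)" using df_mate t wt by auto
    ultimately have "{w, mate t} \<in> edges G" using L[OF w d1(1) d1(2)] by blast
    then have "{w, t} \<notin> edges G" using xor[OF wt] by blast
    then show ?thesis using True by simp
  qed
qed

lemma rhs:
  assumes cM: "card M = n" and n3: "n \<ge> 3" and fn: "forcing_number G M = n - 1"
  shows "\<exists>M0 (u :: nat \<Rightarrow> 'a) v.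
       perfect_matching G M0 \<and> M0 = (\<lambda>k. {u k, v k}) ` {1..n} \<and>
       forcing_number G M0 = n - 1 \<and>
       independent_set G (v ` {1..n-1}) \<and> independent_set G (u ` {1..n-1}) \<and>
       has_two_indep_edges G (u ` {1..n} \<union> {v n}) \<and>
       (\<exists>i j. i \<noteq> j \<and> i \<in> {1..n-1} \<and> j \<in> {1..n-1} \<and>
              {v i, v n} \<in> edges G \<and> {v j, u n} \<in> edges G) \<and>
       (\<forall>k\<in>{1..n-1}. induced_C4 G {u n, v n, u k, v k})"
proof -
  have xV: "x \<in> verts G" using xyzV by blast
  define M0 where "M0 = M - {{x, mate x}}"
  have fx: "{x, mate x} \<in> M" using mate_M xV by blast
  have cM0: "card M0 = n - 1" unfolding M0_def using fx finM cM by simp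
  have "finite M0" unfolding M0_def using finM by simp
  then obtain h where h: "bij_betw h {1..n-1} M0" using ex_bij_betw_nat_finite_1 cM0 by metis
  define u where "u k = (if k = n then x else (SOME w. w \<in> h k \<and> isU w))" for k
  define v where "v k = mate (u k)" for k
  have hk: "h k \<in> M0" if "k \<in> {1..n-1}" for k using h that by (auto simp: bij_betw_def)
  have ukey: "u k \<in> h k \<and> isU (u k) \<and> df x (u k) \<and> h k = {u k, v k}" if k: "k \<in> {1..n-1}" for k
  proof -
    have kn: "k \<noteq> n" using k n3 by auto
    have hkM: "h k \<in> M" and hkx: "h k \<noteq> {x, mate x}" using hk[OF k] unfolding M0_def by auto
    have "card (h k) = 2" using hkM M_E edge_card by blast
    then obtain a where a: "a \<in> h k" by (metis card_2_iff insertI1)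
    have aV: "a \<in> verts G" using a hkM M_Un by blast
    have ha: "h k = {a, mate a}" using M_form hkM a by blast
    have "a \<noteq> x" "a \<noteq> mate x" using ha hkx mate_mate xV by (auto simp: insert_commute)
    then have dxa: "df x a" using aV xV unfolding df_def by auto
    have ex: "\<exists>w. w \<in> h k \<and> isU w" using U_xor[OF dxa] ha by blast
    have uk: "u k \<in> h k \<and> isU (u k)" unfolding u_def using kn someI_ex[OF ex] by simp
    have hu: "h k = {u k, v k}" unfolding v_def using M_form hkM uk by blast
    have "u k = a \<or> u k = mate a" using uk ha by blast
    then have "df x (u k)" using dxa df_mate(1) by metis
    then show ?thesis using uk hu by blast
  qed
  have uuniq: "u k = w" if k: "k \<in> {1..n-1}" and w: "w \<in> h k" "isU w" for k w
  proof -
    have "w = u k \<or> w = v k" using ukey[OF k] w by blast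
    moreover have "\<not> isU (v k)" unfolding v_def using U_xor ukey[OF k] by blast
    ultimately show ?thesis using w by blast
  qed
  have udf: "df (u k) (u l)" if k: "k \<in> {1..n-1}" and l: "l \<in> {1..n-1}" and kl: "k \<noteq> l" for k l
  proof -
    have "h k \<noteq> h l" using h k l kl by (auto simp: bij_betw_def inj_on_def)
    moreover have "h k \<in> M" "h l \<in> M" using hk k l unfolding M0_def by auto
    ultimately have "h k \<inter> h l = {}" using M_disj by blast
    then have "u l \<noteq> u k" "u l \<noteq> mate (u k)" using ukey[OF k] ukey[OF l] unfolding v_def by auto
    then show ?thesis using ukey[OF k] ukey[OF l] dfV unfolding df_def by blast
  qed
  have un: "u n = x" "v n = mate x" unfolding v_def u_def by auto
  have n1: "{1..n} = insert n {1..n-1}" using n3 by auto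
  have R2: "M = (\<lambda>k. {u k, v k}) ` {1..n}"
  proof -
    have "(\<lambda>k. {u k, v k}) ` {1..n-1} = h ` {1..n-1}" using ukey by (auto intro!: image_cong)
    also have "\<dots> = M0" using h by (simp add: bij_betw_def)
    finally show ?thesis unfolding n1 using un fx unfolding M0_def by auto
  qed
  have vdf: "df x (v k)" "\<not> isU (v k)" if "k \<in> {1..n-1}" for k
    using ukey[OF that] df_mate U_xor unfolding v_def by blast+
  have R4: "independent_set G (v ` {1..n-1})"
    unfolding independent_set_def
  proof (intro conjI ballI)
    show "v ` {1..n-1} \<subseteq> verts G" using vdf dfV by blast
    fix p q assume "p \<in> v ` {1..n-1}" "q \<in> v ` {1..n-1}"
    then obtain k l where kl: "k \<in> {1..n-1}" "l \<in> {1..n-1}" "p = v k" "q = v l" by blast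
    show "{p, q} \<notin> edges G"
    proof (cases "k = l")
      case True then show ?thesis using kl edge_not_loop by blast
    next
      case False
      have "df (v k) (v l)" using udf[OF kl(1,2) False] df_mate unfolding v_def by blast
      then show ?thesis using edge_iff vdf kl by blast
    qed
  qed
  have R5: "independent_set G (u ` {1..n-1})"
    unfolding independent_set_def
  proof (intro conjI ballI)
    show "u ` {1..n-1} \<subseteq> verts G" using ukey dfV by blast
    fix p q assume "p \<in> u ` {1..n-1}" "q \<in> u ` {1..n-1}"
    then obtain k l where kl: "k \<in> {1..n-1}" "l \<in> {1..n-1}" "p = u k" "q = u l" by blast
    show "{p, q} \<notin> edges G"
    proof (cases "k = l")
      case True then show ?thesis using kl edge_not_loop by blast
    next
      case False
      have "df (u k) (u l)" using udf[OF kl(1,2) False] .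
      then show ?thesis using edge_iff ukey kl by blast
    qed
  qed
  have fyM0: "{y, mate y} \<in> M0" "{z, mate z} \<in> M0"
    using mate_M xyzV df_ineq[OF dxy] df_ineq[OF dxz] unfolding M0_def by (auto simp: doubleton_eq_iff)
  obtain kb where kb: "kb \<in> {1..n-1}" "h kb = {y, mate y}" using h fyM0(1) by (metis bij_betw_iff_bijections)
  obtain kc where kc: "kc \<in> {1..n-1}" "h kc = {z, mate z}" using h fyM0(2) by (metis bij_betw_iff_bijections)
  have ukb: "u kb = y" using uuniq[OF kb(1)] kb(2) isU_y by blast
  have ukc: "u kc = z" using uuniq[OF kc(1)] kc(2) isU_z by blast
  have kbc: "kb \<noteq> kc" using ukb ukc df_ineq[OF dyz] by metis
  have R6: "has_two_indep_edges G (u ` {1..n} \<union> {v n})"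
    unfolding has_two_indep_edges_def
  proof -
    have yx: "y \<in> u ` {1..n}" "x \<in> u ` {1..n}" "z \<in> u ` {1..n}" using kb kc ukb ukc un n3
      by (auto intro!: image_eqI)
    have a: "{y, x} \<in> induced_edges G (u ` {1..n} \<union> {v n})"
      using exy yx unfolding induced_edges_def by (auto simp: insert_commute)
    have b: "{z, mate x} \<in> induced_edges G (u ` {1..n} \<union> {v n})"
      using exz yx un unfolding induced_edges_def by (auto simp: insert_commute)
    have c: "{y, x} \<inter> {z, mate x} = {}" using df_ineq[OF dxy] df_ineq[OF dxz] df_ineq[OF dyz] by auto
    show "\<exists>e1\<in>induced_edges G (u ` {1..n} \<union> {v n}). \<exists>e2\<in>induced_edges G (u ` {1..n} \<union> {v n}). e1 \<inter> e2 = {}"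
      using a b c by blast
  qed
  have R7: "\<exists>i j. i \<noteq> j \<and> i \<in> {1..n-1} \<and> j \<in> {1..n-1} \<and> {v i, v n} \<in> edges G \<and> {v j, u n} \<in> edges G"
  proof (intro exI conjI)
    show "kb \<noteq> kc" "kb \<in> {1..n-1}" "kc \<in> {1..n-1}" using kbc kb kc by auto
    show "{v kb, v n} \<in> edges G" using F2[OF exy dxy] ukb un unfolding v_def by (simp add: insert_commute)
    have "{mate (mate x), mate z} \<in> edges G" using F2[OF exz df_mate(2)[OF dxz]] .
    then show "{v kc, u n} \<in> edges G" using ukc un mate_mate xV unfolding v_def by (simp add: insert_commute)
  qed
  have R8: "\<forall>k\<in>{1..n-1}. induced_C4 G {u n, v n, u k, v k}"
    using C4 ukey un unfolding v_def by auto
  show ?thesis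
    by (rule exI[of _ M], rule exI[of _ u], rule exI[of _ v]) (use pm R2 fn R4 R5 R6 R7 R8 in simp)
qed

end

lemma fin_fn:
  assumes "simple_graph H"
  shows "finite {forcing_number H N | N. perfect_matching H N}"
proof -
  have fe: "finite (edges H)"
  proof -
    have "edges H \<subseteq> Pow (verts H)" using assms(1) by (auto simp: simple_graph_def)
    moreover have "finite (verts H)" using assms(1) by (simp add: simple_graph_def)
    ultimately show ?thesis using finite_subset by blast
  qed
  have "{N. perfect_matching H N} \<subseteq> Pow (edges H)" by (auto simp: perfect_matching_def matching_def)
  then have "finite {N. perfect_matching H N}" using fe finite_subset by blast
  then show ?thesis using finite_image_set by blast
qed

theorem corollary4p2:
  fixes G :: "'a graph" and n :: nat
  assumes "n \<ge> 3"
    and "G \<in> graphs_pm n"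
    and "max_forcing_number G = n - 1"
    and "minimal_Fn1 n G"
  shows "\<not> extendable 2 G \<longleftrightarrow>
    (\<exists>M (u :: nat \<Rightarrow> 'a) v.
       perfect_matching G M \<and> M = (\<lambda>k. {u k, v k}) ` {1..n} \<and>
       forcing_number G M = n - 1 \<and>
       independent_set G (v ` {1..n-1}) \<and> independent_set G (u ` {1..n-1}) \<and>
       has_two_indep_edges G (u ` {1..n} \<union> {v n}) \<and>
       (\<exists>i j. i \<noteq> j \<and> i \<in> {1..n-1} \<and> j \<in> {1..n-1} \<and>
              {v i, v n} \<in> edges G \<and> {v j, u n} \<in> edges G) \<and>
       (\<forall>k\<in>{1..n-1}. induced_C4 G {u n, v n, u k, v k}))"
proof -
  have n3: "n \<ge> 3" using assms(1) .
  have sg: "simple_graph G" and cV: "card (verts G) = 2 * n" and hpm: "has_perfect_matching G"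
    using assms(2) by (auto simp: graphs_pm_def)
  let ?S = "{forcing_number G M | M. perfect_matching G M}"
  have finS: "finite ?S" by (rule fin_fn[OF sg])
  have neS: "?S \<noteq> {}" using hpm unfolding has_perfect_matching_def by blast
  have "Max ?S \<in> ?S" using Max_in[OF finS neS] .
  moreover have "Max ?S = n - 1" using assms(3) cSup_eq_Max[OF finS neS] unfolding max_forcing_number_def by simp
  ultimately obtain M where pmM: "perfect_matching G M" and fnM: "forcing_number G M = n - 1" by auto
  interpret pmg G M by (unfold_locales) (rule sg, rule pmM)
  have cM: "card M = n" using card_V cV by simp
  have alt: has_alt by (rule alt_of_fn) (use fnM cM n3 in auto)
  have minl: "\<forall>e\<in>edges G. max_forcing_number (delete_edge G e) \<le> card M - 2"
    using assms(4) cM unfolding minimal_Fn1_def by simp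
  have n3': "card M \<ge> 3" using cM n3 by simp
  interpret str G M
    by unfold_locales (rule xor[OF alt n3' minl])
  show ?thesis
  proof
    assume ne: "\<not> extendable 2 G"
    have "card (verts G) \<ge> 2 * 2 + 2" using cV n3 by simp
    then obtain N where N: "matching G N" "card N = 2" "\<not> (\<exists>M'. perfect_matching G M' \<and> N \<subseteq> M')"
      using ne conn hpm unfolding extendable_def by blast
    obtain x y z where c: "df x y" "df x z" "df y z" "{x, y} \<in> edges G" "{mate x, z} \<in> edges G"
      "{mate y, z} \<in> edges G" "\<not> ext2 {x, y} {mate x, z}"
      using config[OF N(1,2)] N(3) by blast
    interpret cfg G M x y z by unfold_locales (rule c)+
    show "\<exists>M (u :: nat \<Rightarrow> 'a) v.
       perfect_matching G M \<and> M = (\<lambda>k. {u k, v k}) ` {1..n} \<and>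
       forcing_number G M = n - 1 \<and>
       independent_set G (v ` {1..n-1}) \<and> independent_set G (u ` {1..n-1}) \<and>
       has_two_indep_edges G (u ` {1..n} \<union> {v n}) \<and>
       (\<exists>i j. i \<noteq> j \<and> i \<in> {1..n-1} \<and> j \<in> {1..n-1} \<and>
              {v i, v n} \<in> edges G \<and> {v j, u n} \<in> edges G) \<and>
       (\<forall>k\<in>{1..n-1}. induced_C4 G {u n, v n, u k, v k})"
      by (rule rhs[OF cM n3 fnM])
  next
    assume "\<exists>M (u :: nat \<Rightarrow> 'a) v.
       perfect_matching G M \<and> M = (\<lambda>k. {u k, v k}) ` {1..n} \<and>
       forcing_number G M = n - 1 \<and>
       independent_set G (v ` {1..n-1}) \<and> independent_set G (u ` {1..n-1}) \<and>
       has_two_indep_edges G (u ` {1..n} \<union> {v n}) \<and>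
       (\<exists>i j. i \<noteq> j \<and> i \<in> {1..n-1} \<and> j \<in> {1..n-1} \<and>
              {v i, v n} \<in> edges G \<and> {v j, u n} \<in> edges G) \<and>
       (\<forall>k\<in>{1..n-1}. induced_C4 G {u n, v n, u k, v k})"
    then obtain M0 and u v :: "nat \<Rightarrow> 'a" where r: "perfect_matching G M0" "M0 = (\<lambda>k. {u k, v k}) ` {1..n}"
      "independent_set G (v ` {1..n-1})" "independent_set G (u ` {1..n-1})"
      "has_two_indep_edges G (u ` {1..n} \<union> {v n})" by blast
    interpret P0: pmg G M0 by unfold_locales (rule sg, rule r(1))
    show "\<not> extendable 2 G" by (rule P0.not_ext[OF cV n3 r(2-5)])
  qed
qed

end
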